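(* Let $L,W,l>0$, $\Omega_2=(-l,L+l)\times(-l,W+l)$, and let $\Omega_3\subseteq\mathbb{R}^2$ be a bounded open set with smooth boundary such that $\overline{\Omega}_2\subseteq\Omega_3$. Let $\chi\in\mathcal{C}^\infty_0(\overline{\Omega}_3)$ be a smooth cutoff function with $\chi=1$ on $\overline{\Omega}_2$. For $M>0$ let $\gamma\in\mathcal{C}^\infty([0,1];[0,\infty))$ satisfy $\operatorname{supp}\gamma\subseteq(0,1)$ and $\gamma(t)=M$ for all $t\in[1/4,3/4]$; set $\mathbf{y}^*(\mathbf{x},t)=(\gamma(t)\chi(\mathbf{x}),0)'$ for $(\mathbf{x},t)\in\overline{\Omega}_3\times[0,1]$, and let $\mathcal{Y}(\mathbf{x},s,t)$ be the flow solving $\frac{d}{dt}\mathcal{Y}(\mathbf{x},s,t)=\mathbf{y}^*(\mathcal{Y}(\mathbf{x},s,t),t)$, $\mathcal{Y}(\mathbf{x},s,s)=\mathbf{x}$. Then, if $M>0$ is chosen large enough, $\mathcal{Y}(\mathbf{x},0,1)\notin\overline{\Omega}_2$ for all $\mathbf{x}\in\overline{\Omega}_2$. *)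

theory Defs
  imports "HOL-Analysis.Analysis"
begin

definition pd :: "bool \<Rightarrow> (real \<times> real \<Rightarrow> real) \<Rightarrow> real \<times> real \<Rightarrow> real" where
  "pd b f = (\<lambda>(x, y). if b then deriv (\<lambda>s. f (s, y)) x else deriv (\<lambda>s. f (x, s)) y)"

definition smooth2 :: "(real \<times> real \<Rightarrow> real) \<Rightarrow> bool" where
  "smooth2 f \<longleftrightarrow> (\<forall>ds z. foldr pd ds f differentiable (at z))"

definition smooth1 :: "(real \<Rightarrow> real) \<Rightarrow> bool" where
  "smooth1 g \<longleftrightarrow> (\<forall>n z. (deriv ^^ n) g differentiable (at z))"

definition smooth_boundary :: "(real \<times> real) set \<Rightarrow> bool" where
  "smooth_boundary \<Omega> \<longleftrightarrow> (\<forall>p\<in>frontier \<Omega>. \<exists>U \<phi>. open U \<and> p \<in> U \<and> smooth2 \<phi> \<and>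
      (\<forall>z\<in>U. (pd True \<phi> z, pd False \<phi> z) \<noteq> (0, 0)) \<and>
      \<Omega> \<inter> U = {z\<in>U. \<phi> z < 0})"

end

theory Submission
  imports Defs
begin

lemma vd_fst:
  assumes "(p has_vector_derivative (a, b)) F"
  shows "((\<lambda>t. fst (p t)) has_real_derivative a) F"
proof -
  have e: "(\<lambda>x::real. x * a) = (*) a" by (auto simp: fun_eq_iff)
  show ?thesis
    using has_derivative_fst[OF assms[unfolded has_vector_derivative_def]]
    by (simp add: has_field_derivative_def e)
qed

lemma vd_snd:
  assumes "(p has_vector_derivative (a, b)) F"
  shows "((\<lambda>t. snd (p t)) has_real_derivative b) F"
proof -
  have e: "(\<lambda>x::real. x * b) = (*) b" by (auto simp: fun_eq_iff)
  show ?thesis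
    using has_derivative_snd[OF assms[unfolded has_vector_derivative_def]]
    by (simp add: has_field_derivative_def e)
qed

lemma cont01:
  fixes f f' :: "real \<Rightarrow> real"
  assumes "\<And>t. t\<in>{0..1} \<Longrightarrow> (f has_real_derivative f' t) (at t within {0..1})"
  shows "continuous_on {0..1} f"
  unfolding continuous_on_eq_continuous_within
  using assms DERIV_continuous by blast

lemma mono01:
  fixes f f' :: "real \<Rightarrow> real"
  assumes d: "\<And>t. t\<in>{0..1} \<Longrightarrow> (f has_real_derivative f' t) (at t within {0..1})"
    and nn: "\<And>t. t0 < t \<Longrightarrow> t < t1 \<Longrightarrow> f' t \<ge> 0"
    and "0 \<le> t0" "t0 \<le> t1" "t1 \<le> 1"
  shows "f t0 \<le> f t1"
proof (rule DERIV_nonneg_imp_increasing_open[OF \<open>t0 \<le> t1\<close>])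
  fix x assume "t0 < x" "x < t1"
  then have "(f has_real_derivative f' x) (at x)"
    using d[of x] assms(3-5) at_within_Icc_at[of 0 x 1] by auto
  then show "\<exists>y. DERIV f x :> y \<and> 0 \<le> y" using nn \<open>t0 < x\<close> \<open>x < t1\<close> by blast
next
  show "continuous_on {t0..t1} f"
    by (rule continuous_on_subset[OF cont01[OF d]]) (use assms(3-5) in auto)
qed

lemma stay_above:
  fixes f f' :: "real \<Rightarrow> real"
  assumes d: "\<And>t. t\<in>{0..1} \<Longrightarrow> (f has_real_derivative f' t) (at t within {0..1})"
    and nn: "\<And>t. t\<in>{0..1} \<Longrightarrow> \<alpha> < f t \<Longrightarrow> f t < \<beta> \<Longrightarrow> f' t \<ge> 0"
    and ac: "\<alpha> < c" and cb: "c < \<beta>" and ta: "0 \<le> ta" "ta \<le> tb" "tb \<le> 1" and fta: "f ta \<ge> c"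
  shows "f tb \<ge> c"
proof (rule ccontr)
  assume "\<not> c \<le> f tb"
  then have ftb: "f tb < c" by simp
  have cont: "continuous_on {0..1} f" using cont01[OF d] .
  define S where "S = {ta..tb} \<inter> f -` {c..}"
  have "closed S" unfolding S_def
  proof (rule continuous_closed_preimage)
    show "continuous_on {ta..tb} f" by (rule continuous_on_subset[OF cont]) (use ta in auto)
  qed auto
  moreover have "S \<noteq> {}" "bdd_above S" using ta fta unfolding S_def by (auto intro!: bdd_aboveI[of _ tb])
  ultimately have sS: "Sup S \<in> S" using closed_contains_Sup by blast
  define s where "s = Sup S"
  have fs: "f s \<ge> c" "ta \<le> s" "s \<le> tb" using sS unfolding s_def S_def by auto
  with ftb have stb: "s < tb" by (cases "s = tb") auto
  have after: "f \<tau> < c" if "s < \<tau>" "\<tau> \<le> tb" for \<tau>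
  proof (rule ccontr)
    assume "\<not> f \<tau> < c"
    then have "\<tau> \<in> S" using that fs unfolding S_def by auto
    then have "\<tau> \<le> s" unfolding s_def using \<open>bdd_above S\<close> by (simp add: cSup_upper)
    with that show False by simp
  qed
  have "continuous (at s within {0..1}) f" using cont fs ta
    by (simp add: continuous_on_eq_continuous_within)
  then obtain e where e: "e > 0" "\<And>\<tau>. \<tau>\<in>{0..1} \<Longrightarrow> dist \<tau> s < e \<Longrightarrow> dist (f \<tau>) (f s) < f s - \<alpha>"
    using ac fs unfolding continuous_within_eps_delta by (metis diff_gt_0_iff_gt order_less_le_trans)
  define tc where "tc = min (s + e/2) tb"
  have tc: "s < tc" "tc \<le> tb" using e stb unfolding tc_def by auto
  have "f s \<le> f tc"
  proof (rule mono01[OF d])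
    fix t assume "s < t" "t < tc"
    then have "t \<in> {0..1}" "dist t s < e" using tc fs ta e unfolding tc_def by (auto simp: dist_real_def)
    then have "\<alpha> < f t" using e(2)[of t] fs by (auto simp: dist_real_def)
    moreover have "f t < \<beta>" using after[of t] \<open>s < t\<close> \<open>t < tc\<close> tc cb by auto
    ultimately show "f' t \<ge> 0" using nn \<open>t \<in> {0..1}\<close> by blast
  qed (use tc fs ta in auto)
  moreover have "f tc < c" using after tc by auto
  ultimately show False using fs by simp
qed

theorem lemma2p1:
  fixes L W l :: real and \<Omega>2 \<Omega>3 :: "(real \<times> real) set" and chi :: "real \<times> real \<Rightarrow> real"
  assumes "L > 0" "W > 0" "l > 0"
  defines "\<Omega>2 \<equiv> {-l<..<L+l} \<times> {-l<..<W+l}"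
  assumes "open \<Omega>3" "bounded \<Omega>3" "smooth_boundary \<Omega>3" "closure \<Omega>2 \<subseteq> \<Omega>3"
    and "smooth2 chi" "closure {z. chi z \<noteq> 0} \<subseteq> closure \<Omega>3"
    and "\<forall>z\<in>closure \<Omega>2. chi z = 1"
  shows "\<exists>M0. \<forall>M\<ge>M0. \<forall>(\<gamma> :: real \<Rightarrow> real) (Y :: real \<times> real \<Rightarrow> real \<Rightarrow> real \<Rightarrow> real \<times> real).
    (M > 0 \<and> smooth1 \<gamma> \<and> (\<forall>t\<in>{0..1}. \<gamma> t \<ge> 0) \<and>
     closure {t. \<gamma> t \<noteq> 0} \<subseteq> {0<..<1} \<and> (\<forall>t\<in>{1/4..3/4}. \<gamma> t = M) \<and>
     (\<forall>x\<in>closure \<Omega>3. \<forall>s\<in>{0..1}. Y x s s = x \<and>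
        (\<forall>t\<in>{0..1}. Y x s t \<in> closure \<Omega>3 \<and>
           (Y x s has_vector_derivative (\<gamma> t * chi (Y x s t), 0)) (at t within {0..1}))))
    \<longrightarrow> (\<forall>x\<in>closure \<Omega>2. Y x 0 1 \<notin> closure \<Omega>2)"
proof -
  define a where "a = L + l"
  have cl2: "closure \<Omega>2 = {-l..a} \<times> {-l..W+l}"
    unfolding \<Omega>2_def a_def closure_Times using assms(1-3) by simp
  have chicont: "isCont chi z" for z
  proof -
    have "foldr pd [] chi differentiable (at z)" using assms(9) unfolding smooth2_def by blast
    then show ?thesis using differentiable_imp_continuous_within by fastforce
  qed
  show ?thesis
  proof (intro exI[of _ "2*(L+2*l)+1"] allI impI ballI)
    fix M \<gamma> Y x
    assume M: "M \<ge> 2*(L+2*l)+1"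
    assume H: "M > 0 \<and> smooth1 \<gamma> \<and> (\<forall>t\<in>{0..1}. \<gamma> t \<ge> 0) \<and>
     closure {t. \<gamma> t \<noteq> 0} \<subseteq> {0<..<1} \<and> (\<forall>t\<in>{1/4..3/4}. \<gamma> t = M) \<and>
     (\<forall>x\<in>closure \<Omega>3. \<forall>s\<in>{0..1}. Y x s s = x \<and>
        (\<forall>t\<in>{0..1}. Y x s t \<in> closure \<Omega>3 \<and>
           (Y x s has_vector_derivative (\<gamma> t * chi (Y x s t), 0)) (at t within {0..1})))"
    assume x: "x \<in> closure \<Omega>2"
    have x3: "x \<in> closure \<Omega>3" using x assms(8) closure_subset by blast
    define p where "p = Y x 0"
    have p0: "p 0 = x" using H x3 unfolding p_def by auto
    have dp: "(p has_vector_derivative (\<gamma> t * chi (p t), 0)) (at t within {0..1})" if "t \<in> {0..1}" for t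
      using H x3 that unfolding p_def by auto
    define f where "f t = fst (p t)" for t
    define g where "g t = snd (p t)" for t
    have df: "(f has_real_derivative (\<gamma> t * chi (p t))) (at t within {0..1})" if "t \<in> {0..1}" for t
      unfolding f_def[abs_def] using vd_fst[OF dp[OF that]] .
    have dg: "(g has_real_derivative 0) (at t within {0..1})" if "t \<in> {0..1}" for t
      unfolding g_def[abs_def] using vd_snd[OF dp[OF that]] .
    have dmg: "((\<lambda>t. - g t) has_real_derivative - 0) (at t within {0..1})" if "t \<in> {0..1}" for t
      using DERIV_minus[OF dg[OF that]] .
    have gconst: "g t = snd x" if "t \<in> {0..1}" for t
    proof -
      have "g 0 \<le> g t" by (rule mono01[OF dg]) (use that in auto)
      moreover have "- g 0 \<le> - g t" by (rule mono01[OF dmg]) (use that in auto)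
      ultimately show ?thesis using p0 unfolding g_def by simp
    qed
    have pt: "p t = (f t, snd x)" if "t \<in> {0..1}" for t
      using gconst[OF that] unfolding f_def g_def by (simp add: prod_eq_iff)
    define h where "h u = chi (u, snd x)" for u
    have hcont: "isCont h u" for u
    proof -
      have "isCont (chi \<circ> (\<lambda>u. (u, snd x))) u"
        by (rule continuous_at_compose) (auto intro!: continuous_intros chicont)
      then show ?thesis unfolding h_def o_def .
    qed
    have sx: "snd x \<in> {-l..W+l}" using x cl2 by (auto simp: mem_Times_iff)
    have h1: "h u = 1" if "u \<in> {-l..a}" for u
      using assms(11) sx that cl2 unfolding h_def by auto
    have "\<exists>d>0. \<forall>u. dist u u0 < d \<longrightarrow> h u > 0" if "u0 \<in> {-l..a}" for u0
    proof -
      obtain d where "d > 0" "\<forall>u. dist u u0 < d \<longrightarrow> dist (h u) (h u0) < 1"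
        using hcont[of u0] unfolding continuous_at_eps_delta by (meson zero_less_one)
      then show ?thesis using h1[OF that] unfolding dist_real_def
        by (intro exI[of _ d]) (auto simp: abs_less_iff)
    qed
    note ex = this
    have "-l \<in> {-l..a}" "a \<in> {-l..a}" using assms(1-3) unfolding a_def by auto
    then obtain d1 d2 where d1: "d1 > 0" "\<And>u. dist u (-l) < d1 \<Longrightarrow> h u > 0"
      and d2: "d2 > 0" "\<And>u. dist u a < d2 \<Longrightarrow> h u > 0"
      using ex by meson
    define \<delta> where "\<delta> = min d1 d2"
    have hpos: "h u > 0" if "-l-\<delta> < u" "u < a+\<delta>" for u
    proof (cases "u < -l")
      case True then show ?thesis using d1 that unfolding \<delta>_def by (auto simp: dist_real_def)
    next
      case False
      show ?thesis
      proof (cases "u > a")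
        case True then show ?thesis using d2 that unfolding \<delta>_def by (auto simp: dist_real_def)
      qed (use False h1 in auto)
    qed
    have \<delta>pos: "\<delta> > 0" using d1 d2 unfolding \<delta>_def by simp
    have nn: "\<gamma> t * chi (p t) \<ge> 0" if "t \<in> {0..1}" "-l-\<delta> < f t" "f t < a+\<delta>" for t
      using hpos[OF that(2,3)] H that(1) pt[OF that(1)] unfolding h_def by auto
    have fl: "f t \<ge> -l" if "t \<in> {0..1}" for t
    proof (rule stay_above[where \<alpha>="-l-\<delta>" and \<beta>="a+\<delta>" and c="-l" and ta=0 and f=f, OF df])
      show "- l - \<delta> < f s \<Longrightarrow> f s < a + \<delta> \<Longrightarrow> 0 \<le> \<gamma> s * chi (p s)" if "s \<in> {0..1}" for s
        using nn that by blast
      show "- l \<le> f 0" using p0 x cl2 by (auto simp: f_def mem_Times_iff)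
    qed (use that \<delta>pos assms(1-3) a_def in auto)
    have "\<exists>t1\<in>{1/4..3/4}. f t1 > a"
    proof (rule ccontr)
      assume "\<not> ?thesis"
      then have le: "f t \<le> a" if "t \<in> {1/4..3/4}" for t using that by force
      define F where "F t = f t - M * t" for t
      have dF: "(F has_real_derivative (\<gamma> t * chi (p t) - M)) (at t within {0..1})" if "t \<in> {0..1}" for t
        unfolding F_def[abs_def] by (rule derivative_eq_intros df[OF that])+ auto
      have "F (1/4) \<le> F (3/4)"
      proof (rule mono01[OF dF])
        fix t :: real assume t: "1/4 < t" "t < 3/4"
        then have "f t \<in> {-l..a}" using le fl by auto
        then have "chi (p t) = 1" using h1 pt t unfolding h_def by auto
        then show "\<gamma> t * chi (p t) - M \<ge> 0" using H t by auto
      qed auto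
      then have "f (3/4) \<ge> f (1/4) + M/2" unfolding F_def by simp
      moreover have "f (1/4) \<ge> -l" "f (3/4) \<le> a" using fl le by auto
      moreover have "M/2 \<ge> L+2*l+1/2" using M by simp
      ultimately show False using assms(1-3) unfolding a_def by linarith
    qed
    then obtain t1 where t1: "t1 \<in> {1/4..3/4}" "f t1 > a" by blast
    have "f 1 \<ge> min (f t1) (a + \<delta>/2)"
    proof (rule stay_above[where \<alpha>="-l-\<delta>" and \<beta>="a+\<delta>" and ta=t1 and f=f, OF df])
      show "- l - \<delta> < f s \<Longrightarrow> f s < a + \<delta> \<Longrightarrow> 0 \<le> \<gamma> s * chi (p s)" if "s \<in> {0..1}" for s
        using nn that by blast
    qed (use t1 \<delta>pos assms(1-3) a_def in auto)
    then have "f 1 > a" using t1 \<delta>pos by linarith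
    then show "Y x 0 1 \<notin> closure \<Omega>2" unfolding cl2 p_def[symmetric] f_def by (auto simp: mem_Times_iff)
  qed
qed

end
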